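(* Let $a\neq0\neq\alpha$ with $a\alpha<0$, and let $\mathscr E^\tau$, $\ell_1(\tau,\mathbf a)$, $\ell_2(\tau,\mathbf a)$, $\tau_1(\mathbf a)$ be as in the context. (a) The function $\Delta(\tau)=\mathscr E^\tau(\ell_1(\tau,\mathbf a))-\mathscr E^\tau(\ell_2(\tau,\mathbf a))$, $\tau\in(0,\frac{\alpha^4}{72a^2}]$, is strictly decreasing, has a unique zero $\tau_0$, and is strictly positive for $\tau<\tau_0$. (b) For any $\mathbf a$ with $a\ne0\ne\alpha$ (either sign of $a\alpha$), the equation $\mathscr E^\tau(\ell_1(\tau,\mathbf a))-\tau=0$ has a unique solution $\tau\ge\tau_1(\mathbf a)$.
   Context: For $\mathbf a=(a,\alpha)$, $\tau>0$, $\ell>0$: $\mathscr E^\tau(\ell)=\frac{6a^2+6a\alpha\ell+2\alpha^2\ell^2}{\ell^3}+\tau\ell$. With $s=\mathrm{sign}(a\alpha)$: $\ell_1(\tau,\mathbf a)=\frac{1}{\sqrt{2\tau}}(s|\alpha|+\sqrt{\alpha^2+6|a|\sqrt{2\tau}})$ and, for $s=-1$ and $\tau\le\alpha^4/(72a^2)$, $\ell_2(\tau,\mathbf a)=\frac{1}{\sqrt{2\tau}}(|\alpha|+\sqrt{\alpha^2-6|a|\sqrt{2\tau}})$; these are local minimisers of $\mathscr E^\tau$. $\tau_1(\mathbf a)$ is the threshold such that $\ell_1(\tau,\mathbf a)\le1$ for all $\tau\ge\tau_1(\mathbf a)$. The quantity $\mathscr E^\tau(\ell_1(\tau,\mathbf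 a))-\tau$ equals $\Sigma^\varepsilon_f(h_{\ell_1})$ when $\tau=\tau(\varepsilon)$, where $h_\ell$ is the cubic minimiser on $[0,\ell)$ with data $(a,\alpha,0,0)$ extended by $0$ on $[\ell,1]$ and $\Sigma_f^\varepsilon(h)=\frac12\int_0^1\ddot h^2-\tau(\varepsilon)|\{h=0\}|$. *)

theory Defs
  imports Complex_Main
begin

definition Een :: "real \<Rightarrow> real \<Rightarrow> real \<Rightarrow> real \<Rightarrow> real" where
  "Een tau a al l = (6 * a^2 + 6 * a * al * l + 2 * al^2 * l^2) / l^3 + tau * l"

definition ell1 :: "real \<Rightarrow> real \<Rightarrow> real \<Rightarrow> real" where
  "ell1 tau a al = (sgn (a * al) * \<bar>al\<bar> + sqrt (al^2 + 6 * \<bar>a\<bar> * sqrt (2 * tau))) / sqrt (2 * tau)"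

definition ell2 :: "real \<Rightarrow> real \<Rightarrow> real \<Rightarrow> real" where
  "ell2 tau a al = (\<bar>al\<bar> + sqrt (al^2 - 6 * \<bar>a\<bar> * sqrt (2 * tau))) / sqrt (2 * tau)"

definition tau1 :: "real \<Rightarrow> real \<Rightarrow> real" where
  "tau1 a al = Inf {t. 0 < t \<and> (\<forall>tau\<ge>t. ell1 tau a al \<le> 1)}"

end

theory Submission
  imports Defs
begin


lemma min_at:
  fixes f g' :: "real \<Rightarrow> real"
  assumes d: "\<And>x. a \<le> x \<Longrightarrow> x \<le> b \<Longrightarrow> (f has_real_derivative g' x) (at x)"
    and m: "a \<le> m" "m \<le> b"
    and neg: "\<And>x. a \<le> x \<Longrightarrow> x \<le> m \<Longrightarrow> g' x \<le> 0"
    and pos: "\<And>x. m \<le> x \<Longrightarrow> x \<le> b \<Longrightarrow> g' x \<ge> 0"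
    and x: "a \<le> x" "x \<le> b"
  shows "f m \<le> f x"
proof (cases "x \<le> m")
  case True
  have "(\<lambda>x. - f x) x \<le> (\<lambda>x. - f x) m"
    by (rule deriv_nonneg_imp_mono[where g' = "\<lambda>x. - g' x"])
       (use True d neg x m in \<open>auto intro!: derivative_eq_intros\<close>)
  then show ?thesis by simp
next
  case False
  show ?thesis
    by (rule deriv_nonneg_imp_mono[where g' = g'])
       (use False d pos x m in \<open>auto\<close>)
qed

lemma Een_deriv:
  assumes "0 < l"
  shows "((\<lambda>l. Een tau a al l) has_real_derivative (tau - 2*(al*l+3*a)^2/l^4)) (at l)"
proof -
  have "((\<lambda>l. Een tau a al l) has_real_derivative
     ((6 * a * al + 2 * al^2 * (2*l)) * l^3 - (6 * a^2 + 6 * a * al * l + 2 * al^2 * l^2) * (3 * l^2)) / (l^3)^2 + tau) (at l)"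
    unfolding Een_def using assms
    by (auto intro!: derivative_eq_intros simp: power2_eq_square)
  moreover have "((6 * a * al + 2 * al^2 * (2*l)) * l^3 - (6 * a^2 + 6 * a * al * l + 2 * al^2 * l^2) * (3 * l^2)) / (l^3)^2 + tau
     = tau - 2*(al*l+3*a)^2/l^4"
    using assms by (simp add: field_simps power2_eq_square) (simp add: algebra_simps eval_nat_numeral)
  ultimately show ?thesis by simp
qed



lemma deriv_sign_neg:
  fixes r x Y tau :: real
  assumes "tau > 0" "r = sqrt (2*tau)" "x > 0" "Y \<ge> 0" "r*x^2 \<le> 2*Y"
  shows "tau - 2*Y^2/x^4 \<le> 0"
proof -
  have r2: "r^2 = 2*tau" using assms by simp
  have "(r*x^2)^2 \<le> (2*Y)^2"
    using assms by (intro power_mono) auto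
  moreover have "(r*x^2)^2 = r^2*x^4" by (simp add: power_mult_distrib flip: power_mult)
  ultimately have "2*tau*x^4 \<le> 4*Y^2" using r2 by (simp add: power_mult_distrib)
  thus ?thesis using assms by (simp add: field_simps)
qed

lemma deriv_sign_pos:
  fixes r x Y tau :: real
  assumes "tau > 0" "r = sqrt (2*tau)" "x > 0" "Y \<ge> 0" "r*x^2 \<ge> 2*Y"
  shows "tau - 2*Y^2/x^4 \<ge> 0"
proof -
  have r2: "r^2 = 2*tau" using assms by simp
  have "(r*x^2)^2 \<ge> (2*Y)^2"
    using assms by (intro power_mono) auto
  moreover have "(r*x^2)^2 = r^2*x^4" by (simp add: power_mult_distrib flip: power_mult)
  ultimately have "2*tau*x^4 \<ge> 4*Y^2" using r2 by (simp add: power_mult_distrib)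
  thus ?thesis using assms by (simp add: field_simps)
qed



lemma core1:
  fixes A B s tau r x :: real and f :: "real \<Rightarrow> real"
  assumes A: "A > 0" and B: "B > 0" and s: "s = 1 \<or> s = -1" and tau: "tau > 0"
    and r: "r = sqrt (2*tau)"
    and d: "\<And>x. x > 0 \<Longrightarrow> (f has_real_derivative (tau - 2*(s*B*x+3*A)^2/x^4)) (at x)"
    and x: "x > 0" "s = 1 \<or> B*x \<le> 3*A"
  shows "f ((s*B + sqrt (B^2 + 6*A*r))/r) \<le> f x"
    and "(s*B + sqrt (B^2 + 6*A*r))/r > 0"
    and "s = 1 \<or> B*((s*B + sqrt (B^2 + 6*A*r))/r) < 3*A"
proof -
  define S where "S = sqrt (B^2 + 6*A*r)"
  define l1 where "l1 = (s*B + S)/r"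
  have rpos: "r > 0" using r tau by simp
  have S2: "S^2 = B^2 + 6*A*r" unfolding S_def using A B rpos by simp
  have SB: "S > B" unfolding S_def using A B rpos by (simp add: real_less_rsqrt)
  have sB: "s*B \<le> B" "-B \<le> s*B" using s B by auto
  have l1pos: "l1 > 0" unfolding l1_def using SB sB rpos by (simp add: field_simps)
  have fac: "r*y^2 - 2*s*B*y - 6*A = r*(y - l1)*(y - (s*B - S)/r)" for y
  proof -
    have "r*(y - l1)*(y - (s*B - S)/r) = r*y^2 - 2*s*B*y + ((s*B)^2 - S^2)/r"
      unfolding l1_def using rpos by (simp add: field_simps power2_eq_square)
    also have "(s*B)^2 = B^2" using s by auto
    finally show ?thesis using S2 rpos by (simp add: field_simps)
  qed
  have l1'neg: "(s*B - S)/r < 0" using SB sB rpos by (simp add: divide_neg_pos)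
  have reg: "s = 1 \<or> B*l1 < 3*A"
  proof (cases "s = 1")
    case False
    hence sm: "s = -1" using s by auto
    have "(B^2 + 3*A*r)^2 > (B*S)^2"
      using S2 A B rpos by (simp add: power_mult_distrib power2_eq_square algebra_simps)
    hence "B^2 + 3*A*r > B*S" using A B rpos
      by (smt (verit) mult_pos_pos power_mono zero_le_power2)
    hence "B*(S - B) < 3*A*r" by (simp add: algebra_simps power2_eq_square)
    thus ?thesis unfolding l1_def using sm rpos by (simp add: field_simps)
  qed simp
  show "l1 > 0" by (fact l1pos)
  show "s = 1 \<or> B*l1 < 3*A" by (fact reg)
  have Ynn: "s*B*y + 3*A \<ge> 0" if "y > 0" "s = 1 \<or> B*y \<le> 3*A" for y
    using that s A B by (auto simp: algebra_simps)
  have key: "y > 0 \<and> (f has_real_derivative tau - 2*(s*B*y+3*A)^2/y^4) (at y) \<and>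
      (y \<le> l1 \<longrightarrow> tau - 2*(s*B*y+3*A)^2/y^4 \<le> 0) \<and> (l1 \<le> y \<longrightarrow> tau - 2*(s*B*y+3*A)^2/y^4 \<ge> 0)"
    if y: "min x l1 \<le> y" "y \<le> max x l1" for y
  proof -
    have ypos: "y > 0" using y x l1pos by (auto simp: min_def split: if_splits)
    have "B*y \<le> B*max x l1" using y B by (intro mult_left_mono) auto
    moreover have "s \<noteq> 1 \<Longrightarrow> B*max x l1 \<le> 3*A" using x reg by (auto simp: max_def)
    ultimately have yreg: "s = 1 \<or> B*y \<le> 3*A" by (meson order_trans)
    have 1: "(f has_real_derivative tau - 2*(s*B*y+3*A)^2/y^4) (at y)" using d ypos .
    have 2: "tau - 2*(s*B*y+3*A)^2/y^4 \<le> 0" if "y \<le> l1"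
    proof -
      have "r*y^2 - 2*s*B*y - 6*A \<le> 0" unfolding fac using rpos ypos l1'neg that
        by (intro mult_nonpos_nonneg mult_nonneg_nonpos) auto
      thus ?thesis
        by (intro deriv_sign_neg[OF tau r ypos Ynn[OF ypos yreg]]) auto
    qed
    have 3: "tau - 2*(s*B*y+3*A)^2/y^4 \<ge> 0" if "l1 \<le> y"
    proof -
      have "r*y^2 - 2*s*B*y - 6*A \<ge> 0" unfolding fac using rpos ypos l1'neg that
        by (intro mult_nonneg_nonneg) auto
      thus ?thesis
        by (intro deriv_sign_pos[OF tau r ypos Ynn[OF ypos yreg]]) auto
    qed
    show ?thesis using ypos 1 2 3 by blast
  qed
  show "f l1 \<le> f x"
    by (rule min_at[where f = f and g' = "\<lambda>y. tau - 2*(s*B*y+3*A)^2/y^4"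
        and a = "min x l1" and b = "max x l1"]) (use key in auto)
qed



lemma core2:
  fixes A B tau r x :: real and f :: "real \<Rightarrow> real"
  assumes A: "A > 0" and B: "B > 0" and tau: "tau > 0"
    and r: "r = sqrt (2*tau)" and rT: "r \<le> B^2/(6*A)"
    and d: "\<And>x. x > 0 \<Longrightarrow> (f has_real_derivative (tau - 2*(B*x-3*A)^2/x^4)) (at x)"
    and x: "x \<ge> 6*A/B"
  shows "f ((B + sqrt (B^2 - 6*A*r))/r) \<le> f x"
    and "(B + sqrt (B^2 - 6*A*r))/r \<ge> 6*A/B"
proof -
  define S where "S = sqrt (B^2 - 6*A*r)"
  define l2 where "l2 = (B + S)/r"
  have rpos: "r > 0" using r tau by simp
  have "r * (6*A) \<le> B^2" using rT A by (simp add: pos_le_divide_eq)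
  hence disc: "B^2 - 6*A*r \<ge> 0" by (smt (verit) mult.commute mult.assoc)
  have S2: "S^2 = B^2 - 6*A*r" unfolding S_def using disc by simp
  have Snn: "S \<ge> 0" unfolding S_def using disc by simp
  have "S \<le> sqrt (B^2)" unfolding S_def using A B rpos by (intro real_sqrt_le_mono) auto
  hence SB: "S \<le> B" using B by simp
  have "6*A/B \<le> B/r" using rT rpos A B by (simp add: field_simps power2_eq_square)
  also have "B/r \<le> l2" unfolding l2_def using Snn rpos by (simp add: divide_right_mono)
  finally have l2ge: "6*A/B \<le> l2" .
  show "6*A/B \<le> l2" by (fact l2ge)
  have fac: "r*y^2 - 2*B*y + 6*A = r*(y - l2)*(y - (B - S)/r)" for y
  proof -
    have "r*(y - l2)*(y - (B - S)/r) = r*y^2 - 2*B*y + (B^2 - S^2)/r"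
      unfolding l2_def using rpos by (simp add: field_simps power2_eq_square)
    thus ?thesis using S2 rpos by (simp add: field_simps)
  qed
  have l3: "(B - S)/r \<le> 6*A/B"
  proof -
    have "B*(B - S) \<le> (B+S)*(B-S)" using Snn SB by (intro mult_right_mono) auto
    also have "\<dots> = 6*A*r" using S2 by (simp add: algebra_simps power2_eq_square)
    finally show ?thesis using rpos B by (simp add: field_simps)
  qed
  have AB: "6*A/B > 0" using A B by simp
  have key: "y > 0 \<and> (f has_real_derivative tau - 2*(B*y-3*A)^2/y^4) (at y) \<and>
      (y \<le> l2 \<longrightarrow> tau - 2*(B*y-3*A)^2/y^4 \<le> 0) \<and> (l2 \<le> y \<longrightarrow> tau - 2*(B*y-3*A)^2/y^4 \<ge> 0)"
    if y: "min x l2 \<le> y" "y \<le> max x l2" for y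
  proof -
    have yge: "y \<ge> 6*A/B" using y x l2ge by (auto simp: min_def split: if_splits)
    have ypos: "y > 0" using yge AB by linarith
    have "B*y \<ge> 6*A" using yge B by (simp add: field_simps)
    hence Ynn: "B*y - 3*A \<ge> 0" using A by simp
    have 1: "(f has_real_derivative tau - 2*(B*y-3*A)^2/y^4) (at y)" using d ypos .
    have 2: "tau - 2*(B*y-3*A)^2/y^4 \<le> 0" if "y \<le> l2"
    proof -
      have "r*y^2 - 2*B*y + 6*A \<le> 0" unfolding fac using rpos ypos l3 yge that
        by (intro mult_nonpos_nonneg mult_nonneg_nonpos) auto
      thus ?thesis
        by (intro deriv_sign_neg[OF tau r ypos Ynn]) auto
    qed
    have 3: "tau - 2*(B*y-3*A)^2/y^4 \<ge> 0" if "l2 \<le> y"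
    proof -
      have "r*y^2 - 2*B*y + 6*A \<ge> 0" unfolding fac using rpos ypos l3 yge that
        by (intro mult_nonneg_nonneg) auto
      thus ?thesis
        by (intro deriv_sign_pos[OF tau r ypos Ynn]) auto
    qed
    show ?thesis using ypos 1 2 3 by blast
  qed
  show "f l2 \<le> f x"
    by (rule min_at[where f = f and g' = "\<lambda>y. tau - 2*(B*y-3*A)^2/y^4"
        and a = "min x l2" and b = "max x l2"]) (use key in auto)
qed



lemma sq_eq1: "(a::real) \<noteq> 0 \<Longrightarrow> al \<noteq> 0 \<Longrightarrow>
  (al*x+3*a)^2 = (sgn (a*al)*\<bar>al\<bar>*x + 3*\<bar>a\<bar>)^2"
  by (cases "a>0"; cases "al>0") (auto simp: sgn_mult power2_eq_square algebra_simps)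

lemma sq_eq2: "(a::real) * al < 0 \<Longrightarrow> (al*x+3*a)^2 = (\<bar>al\<bar>*x - 3*\<bar>a\<bar>)^2"
  by (cases "a>0"; cases "al>0") (auto simp: mult_less_0_iff power2_eq_square algebra_simps)

lemma Een_min1:
  assumes a: "a \<noteq> 0" and al: "al \<noteq> 0" and tau: "tau > 0" and x: "x > 0"
    and reg: "a*al > 0 \<or> \<bar>al\<bar>*x \<le> 3*\<bar>a\<bar>"
  shows "Een tau a al (ell1 tau a al) \<le> Een tau a al x"
    and "ell1 tau a al > 0"
    and "a*al > 0 \<or> \<bar>al\<bar> * ell1 tau a al < 3*\<bar>a\<bar>"
proof -
  have s: "sgn (a*al) = 1 \<or> sgn (a*al) = -1" using a al by (auto simp: sgn_if)
  have s1: "sgn (a*al) = 1 \<longleftrightarrow> a*al > 0" by (auto simp: sgn_if)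
  have e: "ell1 tau a al = (sgn (a*al)*\<bar>al\<bar> + sqrt (\<bar>al\<bar>^2 + 6*\<bar>a\<bar>*sqrt (2*tau)))/sqrt (2*tau)"
    unfolding ell1_def by simp
  have d: "\<And>x. x > 0 \<Longrightarrow> (Een tau a al has_real_derivative
      (tau - 2*(sgn (a*al)*\<bar>al\<bar>*x+3*\<bar>a\<bar>)^2/x^4)) (at x)"
    using Een_deriv sq_eq1[OF a al] by metis
  note c = core1[where A="\<bar>a\<bar>" and B="\<bar>al\<bar>" and s="sgn (a*al)" and tau=tau and r="sqrt(2*tau)",
      OF _ _ s tau refl d x(1)]
  show "Een tau a al (ell1 tau a al) \<le> Een tau a al x"
    unfolding e using c(1) a al reg s1 by auto
  show "ell1 tau a al > 0"
    unfolding e using c(2) a al reg s1 by auto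
  show "a*al > 0 \<or> \<bar>al\<bar> * ell1 tau a al < 3*\<bar>a\<bar>"
    unfolding e using c(3) a al reg s1 by auto
qed

lemma Een_min2:
  assumes aal: "a*al < 0" and tau: "tau > 0" and T: "tau \<le> al^4/(72*a^2)"
    and x: "x \<ge> 6*\<bar>a\<bar>/\<bar>al\<bar>"
  shows "Een tau a al (ell2 tau a al) \<le> Een tau a al x"
    and "ell2 tau a al \<ge> 6*\<bar>a\<bar>/\<bar>al\<bar>"
proof -
  have a: "a \<noteq> 0" and al: "al \<noteq> 0" using aal by auto
  have "sqrt (2*tau) \<le> sqrt (2*(al^4/(72*a^2)))" using T by simp
  also have "2*(al^4/(72*a^2)) = (\<bar>al\<bar>^2/(6*\<bar>a\<bar>))^2"
    using a by (simp add: power2_eq_square field_simps eval_nat_numeral)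
  also have "sqrt \<dots> = \<bar>al\<bar>^2/(6*\<bar>a\<bar>)" by simp
  finally have rT: "sqrt (2*tau) \<le> \<bar>al\<bar>^2/(6*\<bar>a\<bar>)" .
  have e: "ell2 tau a al = (\<bar>al\<bar> + sqrt (\<bar>al\<bar>^2 - 6*\<bar>a\<bar>*sqrt (2*tau)))/sqrt (2*tau)"
    unfolding ell2_def by simp
  have d: "\<And>x. x > 0 \<Longrightarrow> (Een tau a al has_real_derivative
      (tau - 2*(\<bar>al\<bar>*x-3*\<bar>a\<bar>)^2/x^4)) (at x)"
    using Een_deriv sq_eq2[OF aal] by metis
  note c = core2[where A="\<bar>a\<bar>" and B="\<bar>al\<bar>" and tau=tau and r="sqrt(2*tau)",
      OF _ _ tau refl rT d x]
  show "Een tau a al (ell2 tau a al) \<le> Een tau a al x"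
    unfolding e using c(1) a al by auto
  show "ell2 tau a al \<ge> 6*\<bar>a\<bar>/\<bar>al\<bar>"
    unfolding e using c(2) a al by auto
qed



lemma Een_shift: "Een t2 a al x = Een t1 a al x + (t2 - t1) * x"
  unfolding Een_def by (simp add: algebra_simps)

lemma env1:
  assumes a: "a \<noteq> 0" and al: "al \<noteq> 0" and t1: "t1 > 0" and t2: "t2 > 0"
  shows "Een t2 a al (ell1 t2 a al) \<le> Een t1 a al (ell1 t1 a al) + (t2 - t1) * ell1 t1 a al"
proof -
  have x0: "3*\<bar>a\<bar>/\<bar>al\<bar> > 0" "\<bar>al\<bar> * (3*\<bar>a\<bar>/\<bar>al\<bar>) \<le> 3*\<bar>a\<bar>" using a al by auto
  have p: "ell1 t1 a al > 0" by (rule Een_min1(2)[OF a al t1 x0(1)]) (use x0 in auto)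
  have q: "a*al > 0 \<or> \<bar>al\<bar> * ell1 t1 a al < 3*\<bar>a\<bar>" by (rule Een_min1(3)[OF a al t1 x0(1)]) (use x0 in auto)
  have "Een t2 a al (ell1 t2 a al) \<le> Een t2 a al (ell1 t1 a al)"
    by (rule Een_min1(1)[OF a al t2 p]) (use q in auto)
  thus ?thesis using Een_shift[of t2 a al _ t1] by simp
qed

lemma env2:
  assumes aal: "a*al < 0" and t1: "t1 > 0" "t1 \<le> al^4/(72*a^2)" and t2: "t2 > 0" "t2 \<le> al^4/(72*a^2)"
  shows "Een t1 a al (ell2 t1 a al) \<le> Een t2 a al (ell2 t2 a al) + (t1 - t2) * ell2 t2 a al"
proof -
  have "Een t1 a al (ell2 t1 a al) \<le> Een t1 a al (ell2 t2 a al)"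
    by (rule Een_min2(1)[OF aal t1 Een_min2(2)[OF aal t2 order_refl]])
  thus ?thesis using Een_shift[of t1 a al _ t2] by simp
qed



lemma cont_ell1: "continuous_on {0<..} (\<lambda>t. ell1 t a al)"
  unfolding ell1_def by (intro continuous_intros) auto

lemma cont_ell2: "continuous_on {0<..} (\<lambda>t. ell2 t a al)"
  unfolding ell2_def by (intro continuous_intros) auto

lemma cont_Een: "continuous_on S g \<Longrightarrow> (\<And>t. t \<in> S \<Longrightarrow> g t \<noteq> 0) \<Longrightarrow>
   continuous_on S (\<lambda>t. Een t a al (g t))"
  unfolding Een_def by (intro continuous_intros) auto

lemma Een_neg: "a*al < 0 \<Longrightarrow>
  Een t a al x = (6*\<bar>a\<bar>^2 - 6*\<bar>a\<bar>*\<bar>al\<bar>*x + 2*\<bar>al\<bar>^2*x^2)/x^3 + t*x"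
  unfolding Een_def by (cases "a>0"; cases "al>0") (auto simp: mult_less_0_iff)

lemma ell1_pos: "a \<noteq> 0 \<Longrightarrow> al \<noteq> 0 \<Longrightarrow> t > 0 \<Longrightarrow> ell1 t a al > 0"
  and ell1_reg: "a \<noteq> 0 \<Longrightarrow> al \<noteq> 0 \<Longrightarrow> t > 0 \<Longrightarrow> a*al > 0 \<or> \<bar>al\<bar> * ell1 t a al < 3*\<bar>a\<bar>"
proof -
  assume a: "a \<noteq> 0" and al: "al \<noteq> 0" and t: "t > 0"
  have x0: "3*\<bar>a\<bar>/\<bar>al\<bar> > 0" "\<bar>al\<bar> * (3*\<bar>a\<bar>/\<bar>al\<bar>) \<le> 3*\<bar>a\<bar>" using a al by auto
  show "ell1 t a al > 0" by (rule Een_min1(2)[OF a al t x0(1)]) (use x0 in auto)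
  show "a*al > 0 \<or> \<bar>al\<bar> * ell1 t a al < 3*\<bar>a\<bar>" by (rule Een_min1(3)[OF a al t x0(1)]) (use x0 in auto)
qed

lemma partA_dec:
  assumes aal: "a*al < 0" and t: "0 < t1" "t1 < t2" "t2 \<le> al^4/(72*a^2)"
  shows "Een t2 a al (ell1 t2 a al) - Een t2 a al (ell2 t2 a al)
       < Een t1 a al (ell1 t1 a al) - Een t1 a al (ell2 t1 a al)"
proof -
  have a: "a \<noteq> 0" and al: "al \<noteq> 0" using aal by auto
  have t2p: "t2 > 0" using t by simp
  have e1: "Een t2 a al (ell1 t2 a al) \<le> Een t1 a al (ell1 t1 a al) + (t2 - t1) * ell1 t1 a al"
    by (rule env1[OF a al t(1) t2p])
  have e2: "Een t1 a al (ell2 t1 a al) \<le> Een t2 a al (ell2 t2 a al) + (t1 - t2) * ell2 t2 a al"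
    by (rule env2[OF aal t(1) _ t2p t(3)]) (use t in auto)
  have r1: "\<bar>al\<bar> * ell1 t1 a al < 3*\<bar>a\<bar>" using ell1_reg[OF a al t(1)] aal by auto
  have r2: "6*\<bar>a\<bar>/\<bar>al\<bar> \<le> ell2 t2 a al" by (rule Een_min2(2)[OF aal t2p t(3) order_refl])
  have "ell1 t1 a al < 3*\<bar>a\<bar>/\<bar>al\<bar>" using r1 al by (simp add: field_simps)
  also have "\<dots> < 6*\<bar>a\<bar>/\<bar>al\<bar>" using a al by (simp add: divide_strict_right_mono)
  finally have "ell1 t1 a al < ell2 t2 a al" using r2 by linarith
  hence "(t2 - t1) * ell1 t1 a al < (t2 - t1) * ell2 t2 a al" using t by simp
  thus ?thesis using e1 e2 by (simp add: algebra_simps)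
qed

lemma partA_T:
  assumes aal: "a*al < 0" and T: "T = al^4/(72*a^2)"
  shows "Een T a al (ell1 T a al) - Een T a al (ell2 T a al) < 0"
proof -
  have a: "a \<noteq> 0" and al: "al \<noteq> 0" using aal by auto
  define A where "A = \<bar>a\<bar>"
  define B where "B = \<bar>al\<bar>"
  have A: "A > 0" and B: "B > 0" using a al by (auto simp: A_def B_def)
  have Tp: "T > 0" using T a al by simp
  have "2*T = (B^2/(6*A))^2"
    using a unfolding T A_def B_def by (simp add: power2_eq_square field_simps eval_nat_numeral)
  hence r: "sqrt (2*T) = B^2/(6*A)" using A by simp
  have "ell2 T a al = (B + sqrt (B^2 - 6*A*(B^2/(6*A))))/(B^2/(6*A))"
    unfolding ell2_def r A_def B_def by simp
  also have "\<dots> = 6*A/B" using A B by (simp add: field_simps power2_eq_square)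
  finally have l2: "ell2 T a al = 6*A/B" .
  have x0: "3*A/B > 0" "\<bar>al\<bar> * (3*A/B) \<le> 3*\<bar>a\<bar>" using A B by (auto simp: A_def B_def)
  have m1: "Een T a al (ell1 T a al) \<le> Een T a al (3*A/B)"
    by (rule Een_min1(1)[OF a al Tp x0(1)]) (use x0 in auto)
  have "Een T a al (3*A/B) - Een T a al (6*A/B) = - (B^3/(72*A))"
  proof -
    have T': "T = B^4/(72*A^2)" unfolding T A_def B_def by (simp add: power_abs[symmetric] del: power_abs)
    show ?thesis
      unfolding Een_neg[OF aal] A_def[symmetric] B_def[symmetric] T' using A B
      by (simp add: field_simps power2_eq_square eval_nat_numeral)
  qed
  moreover have "- (B^3/(72*A)) < 0" using A B by simp
  ultimately show ?thesis using m1 unfolding l2 by linarith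
qed



lemma lowb:
  fixes A B x t :: real
  assumes A: "A > 0" and B: "B > 0" and x: "x > 0" "B*x \<le> 3*A" and t: "t \<ge> 0"
  shows "(6*A^2 - 6*A*B*x + 2*B^2*x^2)/x^3 + t*x \<ge> 2*B^3/(9*A)"
proof -
  have "0 \<le> 2*(3*A - B*x)^3" using x by simp
  also have "2*(3*A - B*x)^3 = 9*A*(6*A^2 - 6*A*B*x + 2*B^2*x^2) - 2*B^3*x^3"
    by (simp add: power3_eq_cube power2_eq_square algebra_simps)
  finally have "2*B^3*x^3 \<le> 9*A*(6*A^2 - 6*A*B*x + 2*B^2*x^2)" by simp
  hence "2*B^3/(9*A) \<le> (6*A^2 - 6*A*B*x + 2*B^2*x^2)/x^3" using A x
    by (simp add: field_simps)
  moreover have "t*x \<ge> 0" using t x by simp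
  ultimately show ?thesis by linarith
qed

lemma partA_small:
  assumes aal: "a*al < 0" and T: "T = al^4/(72*a^2)"
  shows "Een (T/16) a al (ell1 (T/16) a al) - Een (T/16) a al (ell2 (T/16) a al) > 0"
proof -
  have a: "a \<noteq> 0" and al: "al \<noteq> 0" using aal by auto
  define A where "A = \<bar>a\<bar>"
  define B where "B = \<bar>al\<bar>"
  have A: "A > 0" and B: "B > 0" using a al by (auto simp: A_def B_def)
  have T': "T = B^4/(72*A^2)" unfolding T A_def B_def by (simp add: power_abs[symmetric] del: power_abs)
  have Tp: "T/16 > 0" using T' A B by simp
  have TT: "T/16 \<le> al^4/(72*a^2)" using T Tp by simp
  have reg: "B * ell1 (T/16) a al < 3*A" using ell1_reg[OF a al Tp] aal by (auto simp: A_def B_def)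
  have m1: "Een (T/16) a al (ell1 (T/16) a al) \<ge> 2*B^3/(9*A)"
    unfolding Een_neg[OF aal] A_def[symmetric] B_def[symmetric]
    by (rule lowb[OF A B ell1_pos[OF a al Tp]]) (use reg Tp in auto)
  have x: "24*A/B \<ge> 6*\<bar>a\<bar>/\<bar>al\<bar>" using A B by (simp add: A_def B_def divide_right_mono)
  have m2: "Een (T/16) a al (ell2 (T/16) a al) \<le> Een (T/16) a al (24*A/B)"
    by (rule Een_min2(1)[OF aal Tp TT x])
  have "Een (T/16) a al (24*A/B) = 1302/13824 * (B^3/A)"
    unfolding Een_neg[OF aal] A_def[symmetric] B_def[symmetric] T' using A B
    by (simp add: field_simps power2_eq_square eval_nat_numeral)
  moreover have "1302/13824 * (B^3/A) < 2*B^3/(9*A)" using A B by (simp add: field_simps)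
  ultimately show ?thesis using m1 m2 by linarith
qed



lemma thr_core:
  fixes A B s r :: real
  assumes A: "A > 0" and B: "B > 0" and s: "s = 1 \<or> s = -1" and r: "r > 0"
  shows "(s*B + sqrt (B^2 + 6*A*r))/r \<le> 1 \<longleftrightarrow> 6*A + 2*s*B \<le> r"
    and "(s*B + sqrt (B^2 + 6*A*r))/r < 1 \<longleftrightarrow> 6*A + 2*s*B < r"
proof -
  define S where "S = sqrt (B^2 + 6*A*r)"
  have S2: "S^2 = B^2 + 6*A*r" unfolding S_def using A B r by simp
  have Snn: "S \<ge> 0" unfolding S_def using A B r by simp
  have ss: "s*s = 1" using s by auto
  have sq: "(r - s*B)^2 = r^2 - 2*s*B*r + B^2" using ss by (simp add: power2_eq_square algebra_simps)
  have pos: "6*A + 2*s*B \<le> r \<Longrightarrow> r - s*B \<ge> 0" using s A B r by auto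
  have "(s*B + S)/r \<le> 1 \<longleftrightarrow> S \<le> r - s*B" using r by (simp add: divide_le_eq algebra_simps)
  also have "\<dots> \<longleftrightarrow> 6*A + 2*s*B \<le> r"
  proof
    assume h: "S \<le> r - s*B"
    hence "S^2 \<le> (r - s*B)^2" using Snn by (intro power_mono) auto
    hence "6*A*r \<le> r*r - 2*s*B*r" using S2 sq by (simp add: power2_eq_square)
    hence "6*A*r \<le> (r - 2*s*B)*r" by (simp add: algebra_simps)
    hence "6*A \<le> r - 2*s*B" using r by (simp add: mult_le_cancel_right)
    thus "6*A + 2*s*B \<le> r" by simp
  next
    assume h: "6*A + 2*s*B \<le> r"
    have "6*A*r \<le> (r - 2*s*B)*r" using h r by (intro mult_right_mono) auto
    hence "B^2 + 6*A*r \<le> (r - s*B)^2" unfolding sq by (simp add: power2_eq_square algebra_simps)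
    thus "S \<le> r - s*B" unfolding S_def using pos[OF h] by (intro real_le_lsqrt) auto
  qed
  finally show "(s*B + sqrt (B^2 + 6*A*r))/r \<le> 1 \<longleftrightarrow> 6*A + 2*s*B \<le> r" unfolding S_def .
  have "(s*B + S)/r < 1 \<longleftrightarrow> S < r - s*B" using r by (simp add: divide_less_eq algebra_simps)
  also have "\<dots> \<longleftrightarrow> 6*A + 2*s*B < r"
  proof
    assume h: "S < r - s*B"
    hence "S^2 < (r - s*B)^2" using Snn by (intro power_strict_mono) auto
    hence "6*A*r < r*r - 2*s*B*r" using S2 sq by (simp add: power2_eq_square)
    hence "6*A*r < (r - 2*s*B)*r" by (simp add: algebra_simps)
    hence "6*A < r - 2*s*B" using r by (simp add: mult_less_cancel_right)
    thus "6*A + 2*s*B < r" by simp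
  next
    assume h: "6*A + 2*s*B < r"
    have "6*A*r < (r - 2*s*B)*r" using h r by (intro mult_strict_right_mono) auto
    hence "B^2 + 6*A*r < (r - s*B)^2" unfolding sq by (simp add: power2_eq_square algebra_simps)
    thus "S < r - s*B" unfolding S_def using pos h by (intro real_less_lsqrt) auto
  qed
  finally show "(s*B + sqrt (B^2 + 6*A*r))/r < 1 \<longleftrightarrow> 6*A + 2*s*B < r" unfolding S_def .
qed

definition cc :: "real \<Rightarrow> real \<Rightarrow> real" where
  "cc a al = 6*\<bar>a\<bar> + 2*sgn (a*al)*\<bar>al\<bar>"

lemma thr:
  assumes a: "a \<noteq> 0" and al: "al \<noteq> 0" and t: "t > 0"
  shows "ell1 t a al \<le> 1 \<longleftrightarrow> cc a al \<le> sqrt (2*t)"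
    and "ell1 t a al < 1 \<longleftrightarrow> cc a al < sqrt (2*t)"
proof -
  have s: "sgn (a*al) = 1 \<or> sgn (a*al) = -1" using a al by (auto simp: sgn_if)
  have e: "ell1 t a al = (sgn (a*al)*\<bar>al\<bar> + sqrt (\<bar>al\<bar>^2 + 6*\<bar>a\<bar>*sqrt (2*t)))/sqrt (2*t)"
    unfolding ell1_def by simp
  note c = thr_core[where A="\<bar>a\<bar>" and B="\<bar>al\<bar>" and s="sgn (a*al)" and r="sqrt (2*t)"]
  show "ell1 t a al \<le> 1 \<longleftrightarrow> cc a al \<le> sqrt (2*t)"
    unfolding e cc_def using c(1) a al s t by (simp add: mult.assoc)
  show "ell1 t a al < 1 \<longleftrightarrow> cc a al < sqrt (2*t)"
    unfolding e cc_def using c(2) a al s t by (simp add: mult.assoc)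
qed

lemma aux_set: "(c::real) > 0 \<Longrightarrow> {t. 0 < t \<and> c \<le> t} = {c..}" by auto

lemma tau1_val:
  assumes a: "a \<noteq> 0" and al: "al \<noteq> 0"
  shows "tau1 a al = (if cc a al \<le> 0 then 0 else (cc a al)^2/2)"
proof -
  have iff: "cc a al \<le> sqrt (2*t) \<longleftrightarrow> (if cc a al \<le> 0 then 0 else (cc a al)^2/2) \<le> t" if "t > 0" for t
  proof (cases "cc a al \<le> 0")
    case True
    have "0 \<le> sqrt (2*t)" using that by simp
    hence h0: "cc a al \<le> sqrt (2*t)" using True by linarith
    show ?thesis using that True h0 by simp
  next
    case False
    have "cc a al \<le> sqrt (2*t) \<longleftrightarrow> (cc a al)^2 \<le> 2*t"
    proof
      assume "cc a al \<le> sqrt (2*t)"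
      hence "(cc a al)^2 \<le> (sqrt (2*t))^2" using False by (intro power_mono) auto
      thus "(cc a al)^2 \<le> 2*t" using that by simp
    qed (rule real_le_rsqrt)
    then show ?thesis using False by auto
  qed
  have "{t. 0 < t \<and> (\<forall>tau\<ge>t. ell1 tau a al \<le> 1)} = {t. 0 < t \<and> (if cc a al \<le> 0 then 0 else (cc a al)^2/2) \<le> t}"
  proof (intro Collect_cong iffI conjI)
    fix t assume h: "0 < t \<and> (\<forall>tau\<ge>t. ell1 tau a al \<le> 1)"
    thus "0 < t" by simp
    have "ell1 t a al \<le> 1" using h by simp
    thus "(if cc a al \<le> 0 then 0 else (cc a al)^2/2) \<le> t" using thr(1)[OF a al] iff h by auto
  next
    fix t assume h: "0 < t \<and> (if cc a al \<le> 0 then 0 else (cc a al)^2/2) \<le> t"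
    thus "0 < t" by simp
    show "\<forall>tau\<ge>t. ell1 tau a al \<le> 1"
    proof (intro allI impI)
      fix tau assume "tau \<ge> t"
      hence "tau > 0" "(if cc a al \<le> 0 then 0 else (cc a al)^2/2) \<le> tau" using h by auto
      thus "ell1 tau a al \<le> 1" using thr(1)[OF a al] iff by auto
    qed
  qed
  also have "\<dots> = (if cc a al \<le> 0 then {0<..} else {(cc a al)^2/2..})"
  proof (cases "cc a al \<le> 0")
    case False
    hence p: "(cc a al)^2/2 > 0" by simp
    have "{t. 0 < t \<and> (cc a al)^2/2 \<le> t} = {(cc a al)^2/2..}"
      by (rule aux_set[OF p])
    thus ?thesis using False by simp
  qed auto
  finally show ?thesis unfolding tau1_def by auto
qed



lemma thr_tau:
  assumes a: "a \<noteq> 0" and al: "al \<noteq> 0" and t: "t > 0"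
  shows "tau1 a al \<le> t \<Longrightarrow> ell1 t a al \<le> 1"
    and "tau1 a al < t \<Longrightarrow> ell1 t a al < 1"
    and "tau1 a al \<le> t \<Longrightarrow> \<not> tau1 a al < t \<Longrightarrow> ell1 t a al = 1"
proof -
  have sq: "0 < sqrt (2*t)" using t by simp
  have i1: "tau1 a al \<le> t \<Longrightarrow> cc a al \<le> sqrt (2*t)"
  proof (cases "cc a al \<le> 0")
    case True thus "cc a al \<le> sqrt (2*t)" using sq by linarith
  next
    case False
    assume "tau1 a al \<le> t"
    hence "(cc a al)^2 \<le> 2*t" using False tau1_val[OF a al] by simp
    thus ?thesis by (rule real_le_rsqrt)
  qed
  have i2: "tau1 a al < t \<Longrightarrow> cc a al < sqrt (2*t)"
  proof (cases "cc a al \<le> 0")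
    case True thus "cc a al < sqrt (2*t)" using sq by linarith
  next
    case False
    assume "tau1 a al < t"
    hence "(cc a al)^2 < 2*t" using False tau1_val[OF a al] by simp
    thus ?thesis by (rule real_less_rsqrt)
  qed
  have i3: "cc a al < sqrt (2*t)" if "\<not> tau1 a al < t" "ell1 t a al < 1"
  proof -
    have "cc a al < sqrt (2*t)" using thr(2)[OF a al t] that by simp
    thus ?thesis .
  qed
  have i4: False if h: "\<not> tau1 a al < t" "cc a al < sqrt (2*t)"
  proof (cases "cc a al \<le> 0")
    case True thus False using h t tau1_val[OF a al] by simp
  next
    case False
    hence "(cc a al)^2 < (sqrt (2*t))^2" using h by (intro power_strict_mono) auto
    hence "(cc a al)^2/2 < t" using t by simp
    thus False using h False tau1_val[OF a al] by simp
  qed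
  show "tau1 a al \<le> t \<Longrightarrow> ell1 t a al \<le> 1" using i1 thr(1)[OF a al t] by simp
  show "tau1 a al < t \<Longrightarrow> ell1 t a al < 1" using i2 thr(2)[OF a al t] by simp
  show "tau1 a al \<le> t \<Longrightarrow> \<not> tau1 a al < t \<Longrightarrow> ell1 t a al = 1"
    using i1 thr(1)[OF a al t] i3 i4 by force
qed

lemma tau1_nonneg: "a \<noteq> 0 \<Longrightarrow> al \<noteq> 0 \<Longrightarrow> tau1 a al \<ge> 0"
  using tau1_val[of a al] by simp

lemma g_dec:
  assumes a: "a \<noteq> 0" and al: "al \<noteq> 0" and t: "0 < t1" "t1 < t2" "tau1 a al \<le> t1"
  shows "Een t2 a al (ell1 t2 a al) - t2 < Een t1 a al (ell1 t1 a al) - t1"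
proof -
  define m where "m = (t1 + t2)/2"
  have m: "t1 < m" "m < t2" "m > 0" using t by (auto simp: m_def)
  have l1: "ell1 t1 a al \<le> 1" using thr_tau(1)[OF a al t(1) t(3)] .
  have lm: "ell1 m a al < 1" using thr_tau(2)[OF a al m(3)] t m by simp
  have e1: "Een t2 a al (ell1 t2 a al) \<le> Een m a al (ell1 m a al) + (t2 - m) * ell1 m a al"
    by (rule env1[OF a al m(3)]) (use t in simp)
  have e2: "Een m a al (ell1 m a al) \<le> Een t1 a al (ell1 t1 a al) + (m - t1) * ell1 t1 a al"
    by (rule env1[OF a al t(1) m(3)])
  have "(t2 - m) * ell1 m a al < (t2 - m) * 1" using m lm by (intro mult_strict_left_mono) auto
  moreover have "(m - t1) * ell1 t1 a al \<le> (m - t1) * 1" using m l1 by (intro mult_left_mono) auto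
  ultimately show ?thesis using e1 e2 by simp
qed



lemma g_cont:
  assumes a: "a \<noteq> 0" and al: "al \<noteq> 0" and p: "0 < ta"
  shows "continuous_on {ta..tb} (\<lambda>t. Een t a al (ell1 t a al) - t)"
proof -
  have s: "{ta..tb} \<subseteq> {0<..}" using p by auto
  have "continuous_on {ta..tb} (\<lambda>t. ell1 t a al)"
    using cont_ell1 s by (rule continuous_on_subset)
  hence "continuous_on {ta..tb} (\<lambda>t. Een t a al (ell1 t a al))"
  proof (rule cont_Een)
    fix t assume "t \<in> {ta..tb}"
    hence "t > 0" using p by simp
    thus "ell1 t a al \<noteq> 0" using ell1_pos[OF a al] by (metis less_irrefl)
  qed
  thus ?thesis by (intro continuous_intros)
qed

lemma g_low:
  assumes a: "a \<noteq> 0" and al: "al \<noteq> 0"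
  shows "\<exists>ta. 0 < ta \<and> tau1 a al \<le> ta \<and> Een ta a al (ell1 ta a al) - ta > 0"
proof (cases "cc a al \<le> 0")
  case False
  define ta where "ta = (cc a al)^2/2"
  have ta: "tau1 a al = ta" "ta > 0" using tau1_val[OF a al] False by (auto simp: ta_def)
  have "ell1 ta a al = 1" using thr_tau(3)[OF a al ta(2)] ta by simp
  moreover have "6*a^2 + 6*a*al + 2*al^2 > 0"
  proof -
    have "6*a^2 + 6*a*al + 2*al^2 = 6*(a + al/2)^2 + al^2/2" by (simp add: power2_eq_square algebra_simps)
    moreover have "al^2/2 > 0" using al by simp
    moreover have "6*(a + al/2)^2 \<ge> 0" by simp
    ultimately show ?thesis by linarith
  qed
  ultimately show ?thesis using ta by (intro exI[of _ ta]) (auto simp: Een_def)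
next
  case True
  have aal: "a*al < 0"
  proof (rule ccontr)
    assume "\<not> a*al < 0"
    moreover have "a*al \<noteq> 0" using a al by simp
    ultimately have "a*al > 0" by linarith
    hence "cc a al > 0" using a al by (simp add: cc_def)
    thus False using True by simp
  qed
  define A where "A = \<bar>a\<bar>"
  define B where "B = \<bar>al\<bar>"
  have A: "A > 0" and B: "B > 0" using a al by (auto simp: A_def B_def)
  define ta where "ta = B^3/(9*A)"
  have tap: "ta > 0" using A B by (simp add: ta_def)
  have t1: "tau1 a al = 0" using tau1_val[OF a al] True by simp
  have reg: "B * ell1 ta a al < 3*A" using ell1_reg[OF a al tap] aal by (auto simp: A_def B_def)
  have m1: "Een ta a al (ell1 ta a al) \<ge> 2*B^3/(9*A)"
    unfolding Een_neg[OF aal] A_def[symmetric] B_def[symmetric]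
    by (rule lowb[OF A B ell1_pos[OF a al tap]]) (use reg tap in auto)
  have "2*B^3/(9*A) - ta > 0" using A B by (simp add: ta_def field_simps)
  thus ?thesis using m1 tap t1 by (intro exI[of _ ta]) auto
qed

lemma g_high:
  assumes a: "a \<noteq> 0" and al: "al \<noteq> 0" and ta: "ta > 0"
  shows "\<exists>tb. ta \<le> tb \<and> Een tb a al (ell1 tb a al) - tb \<le> 0"
proof -
  define x0 where "x0 = min (1/2) (3*\<bar>a\<bar>/\<bar>al\<bar>)"
  have x0: "x0 > 0" "\<bar>al\<bar>*x0 \<le> 3*\<bar>a\<bar>" "x0 \<le> 1/2"
  proof -
    show "x0 > 0" using a al by (simp add: x0_def)
    have "\<bar>al\<bar>*x0 \<le> \<bar>al\<bar>*(3*\<bar>a\<bar>/\<bar>al\<bar>)" by (intro mult_left_mono) (auto simp: x0_def)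
    thus "\<bar>al\<bar>*x0 \<le> 3*\<bar>a\<bar>" using al by simp
    show "x0 \<le> 1/2" by (simp add: x0_def)
  qed
  define K where "K = Een 0 a al x0"
  define tb where "tb = ta + 2*\<bar>K\<bar> + 1"
  have tbp: "tb > 0" "ta \<le> tb" using ta by (auto simp: tb_def)
  have "Een tb a al (ell1 tb a al) \<le> Een tb a al x0"
    by (rule Een_min1(1)[OF a al tbp(1) x0(1)]) (use x0 in auto)
  also have "\<dots> = K + tb*x0" unfolding K_def using Een_shift[of tb a al x0 0] by simp
  also have "\<dots> \<le> K + tb/2" using x0 tbp by (simp add: mult_left_mono)
  finally have "Een tb a al (ell1 tb a al) - tb \<le> K - tb/2" by simp
  also have "\<dots> \<le> 0" unfolding tb_def using ta by simp
  finally show ?thesis using tbp by blast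
qed

lemma partB:
  assumes a: "a \<noteq> 0" and al: "al \<noteq> 0"
  shows "\<exists>!tau. 0 < tau \<and> tau1 a al \<le> tau \<and> Een tau a al (ell1 tau a al) - tau = 0"
proof -
  obtain ta where ta: "0 < ta" "tau1 a al \<le> ta" "Een ta a al (ell1 ta a al) - ta > 0"
    using g_low[OF a al] by blast
  obtain tb where tb: "ta \<le> tb" "Een tb a al (ell1 tb a al) - tb \<le> 0"
    using g_high[OF a al ta(1)] by blast
  obtain t0 where t0: "ta \<le> t0" "t0 \<le> tb" "Een t0 a al (ell1 t0 a al) - t0 = 0"
    using IVT2'[of "\<lambda>t. Een t a al (ell1 t a al) - t" tb 0 ta, OF tb(2) _ tb(1) g_cont[OF a al ta(1)]]
      ta(3) by auto
  show ?thesis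
  proof (rule ex1I[of _ t0])
    show "0 < t0 \<and> tau1 a al \<le> t0 \<and> Een t0 a al (ell1 t0 a al) - t0 = 0" using t0 ta by auto
    fix t assume h: "0 < t \<and> tau1 a al \<le> t \<and> Een t a al (ell1 t a al) - t = 0"
    show "t = t0"
    proof (rule ccontr)
      assume "t \<noteq> t0"
      hence "t < t0 \<or> t0 < t" by auto
      thus False
      proof
        assume "t < t0" thus False using g_dec[OF a al _ _ _, of t t0] h t0 by auto
      next
        assume "t0 < t" thus False using g_dec[OF a al _ _ _, of t0 t] h t0 ta by auto
      qed
    qed
  qed
qed



lemma partA:
  assumes aal: "a*al < 0"
  defines "T \<equiv> al^4/(72*a^2)"
  defines "D \<equiv> (\<lambda>tau. Een tau a al (ell1 tau a al) - Een tau a al (ell2 tau a al))"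
  shows "(\<forall>t1 t2. 0 < t1 \<and> t1 < t2 \<and> t2 \<le> T \<longrightarrow> D t2 < D t1) \<and>
          (\<exists>!t0. 0 < t0 \<and> t0 \<le> T \<and> D t0 = 0) \<and>
          (\<forall>t0. 0 < t0 \<and> t0 \<le> T \<and> D t0 = 0 \<longrightarrow> (\<forall>tau. 0 < tau \<and> tau < t0 \<longrightarrow> D tau > 0))"
proof -
  have a: "a \<noteq> 0" and al: "al \<noteq> 0" using aal by auto
  have Tp: "T > 0" using a al by (simp add: T_def)
  have dec: "\<And>t1 t2. 0 < t1 \<Longrightarrow> t1 < t2 \<Longrightarrow> t2 \<le> T \<Longrightarrow> D t2 < D t1"
    unfolding D_def T_def by (rule partA_dec[OF aal])
  have DT: "D T < 0" unfolding D_def by (rule partA_T[OF aal]) (simp add: T_def)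
  have Ds: "D (T/16) > 0" unfolding D_def by (rule partA_small[OF aal]) (simp add: T_def)
  have cont: "continuous_on {T/16..T} D"
  proof -
    have s: "{T/16..T} \<subseteq> {0<..}" using Tp by auto
    have c1: "continuous_on {T/16..T} (\<lambda>t. ell1 t a al)" using cont_ell1 s by (rule continuous_on_subset)
    have c2: "continuous_on {T/16..T} (\<lambda>t. ell2 t a al)" using cont_ell2 s by (rule continuous_on_subset)
    have "continuous_on {T/16..T} (\<lambda>t. Een t a al (ell1 t a al))"
    proof (rule cont_Een[OF c1])
      fix t assume "t \<in> {T/16..T}"
      hence "t > 0" using Tp by simp
      thus "ell1 t a al \<noteq> 0" using ell1_pos[OF a al] by (metis less_irrefl)
    qed
    moreover have "continuous_on {T/16..T} (\<lambda>t. Een t a al (ell2 t a al))"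
    proof (rule cont_Een[OF c2])
      fix t assume t: "t \<in> {T/16..T}"
      hence tp: "t > 0" using Tp by simp
      have "6*\<bar>a\<bar>/\<bar>al\<bar> \<le> ell2 t a al" by (rule Een_min2(2)[OF aal tp _ order_refl]) (use t in \<open>simp add: T_def\<close>)
      moreover have "6*\<bar>a\<bar>/\<bar>al\<bar> > 0" using a al by simp
      ultimately show "ell2 t a al \<noteq> 0" by linarith
    qed
    ultimately show ?thesis unfolding D_def by (intro continuous_intros)
  qed
  obtain t0 where t0: "T/16 \<le> t0" "t0 \<le> T" "D t0 = 0"
    using IVT2'[of D T 0 "T/16", OF _ _ _ cont] DT Ds Tp by auto
  have uniq: "t = t0" if "0 < t" "t \<le> T" "D t = 0" for t
  proof (rule ccontr)
    assume "t \<noteq> t0"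
    hence "t < t0 \<or> t0 < t" by auto
    thus False
    proof
      assume "t < t0" thus False using dec[of t t0] that t0 by auto
    next
      assume "t0 < t" thus False using dec[of t0 t] that t0 Tp by auto
    qed
  qed
  show ?thesis
  proof (intro conjI allI impI)
    show "\<exists>!t0. 0 < t0 \<and> t0 \<le> T \<and> D t0 = 0"
      using t0 Tp uniq by (intro ex1I[of _ t0]) auto
  next
    fix t1 t2 assume "0 < t1 \<and> t1 < t2 \<and> t2 \<le> T" thus "D t2 < D t1" using dec by blast
  next
    fix s tau assume h: "0 < s \<and> s \<le> T \<and> D s = 0" "0 < tau \<and> tau < s"
    thus "D tau > 0" using dec[of tau s] by auto
  qed
qed

theorem lemma2p7:
  fixes a al :: real
  shows
   "(a \<noteq> 0 \<and> al \<noteq> 0 \<and> a * al < 0 \<longrightarrow>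
      (let T = al^4 / (72 * a^2);
           \<Delta> = (\<lambda>tau. Een tau a al (ell1 tau a al) - Een tau a al (ell2 tau a al))
       in (\<forall>t1 t2. 0 < t1 \<and> t1 < t2 \<and> t2 \<le> T \<longrightarrow> \<Delta> t2 < \<Delta> t1) \<and>
          (\<exists>!t0. 0 < t0 \<and> t0 \<le> T \<and> \<Delta> t0 = 0) \<and>
          (\<forall>t0. 0 < t0 \<and> t0 \<le> T \<and> \<Delta> t0 = 0 \<longrightarrow> (\<forall>tau. 0 < tau \<and> tau < t0 \<longrightarrow> \<Delta> tau > 0))))
    \<and>
    (a \<noteq> 0 \<and> al \<noteq> 0 \<longrightarrow>
      (\<exists>!tau. 0 < tau \<and> tau1 a al \<le> tau \<and> Een tau a al (ell1 tau a al) - tau = 0))"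
  using partA[of a al] partB[of a al] unfolding Let_def by blast


end
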